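(* Let $n,t,k$ be positive integers with $n>(2k-1)t$ and let $G=G_n\langle t,2t,\ldots,kt\rangle$. Let $s$ be the integer with $1\le s\le t$ and $s\equiv n\pmod t$. Then $$\theta_v(G)=s\left\lceil\frac{\lceil n/t\rceil}{k+1}\right\rceil+(t-s)\left\lceil\frac{\lfloor n/t\rfloor}{k+1}\right\rceil.$$
   Context: For integers $n\ge 2$, $k\ge 1$ and $1\le t_1<t_2<\cdots<t_k\le n-1$, the Toeplitz graph $G_n\langle t_1,\ldots,t_k\rangle$ is the simple graph with vertex set $[n]=\{1,\ldots,n\}$ in which two distinct vertices $i,j$ are adjacent if and only if $|i-j|\in\{t_1,\ldots,t_k\}$. A clique cover of a graph is a set of cliques such that every vertex lies in at least one of them; $\theta_v(G)$, the (vertex) clique cover number, is the minimum size of a clique cover of $G$. *)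

theory Defs
  imports Complex_Main
begin

definition toeplitz_adj :: "nat \<Rightarrow> nat set \<Rightarrow> nat \<Rightarrow> nat \<Rightarrow> bool" where
  "toeplitz_adj n T i j \<longleftrightarrow> i \<in> {1..n} \<and> j \<in> {1..n} \<and> i \<noteq> j \<and>
     (if i \<le> j then j - i else i - j) \<in> T"

definition is_clique :: "nat \<Rightarrow> nat set \<Rightarrow> nat set \<Rightarrow> bool" where
  "is_clique n T K \<longleftrightarrow> K \<subseteq> {1..n} \<and>
     (\<forall>i\<in>K. \<forall>j\<in>K. i \<noteq> j \<longrightarrow> toeplitz_adj n T i j)"

definition is_clique_cover :: "nat \<Rightarrow> nat set \<Rightarrow> nat set set \<Rightarrow> bool" where
  "is_clique_cover n T C \<longleftrightarrow> (\<forall>K\<in>C. is_clique n T K) \<and> \<Union>C = {1..n}"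

definition theta_v :: "nat \<Rightarrow> nat set \<Rightarrow> nat" where
  "theta_v n T = (LEAST m. \<exists>C. is_clique_cover n T C \<and> finite C \<and> card C = m)"

end

theory Submission
  imports Defs
begin

lemma clique_same_class:
  assumes "is_clique n ((\<lambda>i. i*t) ` {1..k}) K" "x \<in> K" "y \<in> K"
  shows "(x-1) mod t = (y-1) mod t"
proof (cases "x = y")
  case True then show ?thesis by simp
next
  case False
  then have adj: "toeplitz_adj n ((\<lambda>i. i*t) ` {1..k}) x y" using assms unfolding is_clique_def by blast
  then have x1: "x \<ge> 1" and y1: "y \<ge> 1" unfolding toeplitz_adj_def by auto
  show ?thesis
  proof (cases "x \<le> y")
    case True
    then obtain i where "y - x = i*t" using adj unfolding toeplitz_adj_def by auto
    then have "y - 1 = (x - 1) + i*t" using True x1 by linarith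
    then show ?thesis by simp
  next
    case False
    then obtain i where "x - y = i*t" using adj unfolding toeplitz_adj_def by auto
    then have "x - 1 = (y - 1) + i*t" using False y1 by linarith
    then show ?thesis by simp
  qed
qed

lemma clique_card:
  assumes "is_clique n ((\<lambda>i. i*t) ` {1..k}) K"
  shows "card K \<le> k+1"
proof (cases "K = {}")
  case True then show ?thesis by simp
next
  case False
  have Ks: "K \<subseteq> {1..n}" using assms unfolding is_clique_def by simp
  have fin: "finite K" by (rule finite_subset[OF Ks]) simp
  define a where "a = Min K"
  have aK: "a \<in> K" using fin False unfolding a_def by simp
  have sub: "K \<subseteq> (\<lambda>i. a + i*t) ` {0..k}"
  proof
    fix x assume xK: "x \<in> K"
    have ax: "a \<le> x" using fin xK unfolding a_def by simp
    show "x \<in> (\<lambda>i. a + i*t) ` {0..k}"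
    proof (cases "x = a")
      case True then have "x = a + 0*t" by simp
      then show ?thesis by (intro rev_image_eqI[where x=0]) simp_all
    next
      case False
      have all: "\<forall>i\<in>K. \<forall>j\<in>K. i \<noteq> j \<longrightarrow> toeplitz_adj n ((\<lambda>i. i*t) ` {1..k}) i j"
        using assms unfolding is_clique_def by simp
      have adj: "toeplitz_adj n ((\<lambda>i. i*t) ` {1..k}) a x" using all aK xK False by simp
      then have "x - a \<in> (\<lambda>i. i*t) ` {1..k}" using ax unfolding toeplitz_adj_def by simp
      then obtain i where i: "i \<in> {1..k}" "x - a = i*t" by blast
      then have "x = a + i*t" using ax by linarith
      then show ?thesis using i(1) by (intro rev_image_eqI[where x=i]) simp_all
    qed
  qed
  have "card K \<le> card ((\<lambda>i. a + i*t) ` {0..k})" by (rule card_mono[OF _ sub]) simp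
  also have "\<dots> \<le> card {0..k}" by (rule card_image_le) simp
  finally show ?thesis by simp
qed

lemma block_diff:
  fixes a b t k :: nat
  assumes "t \<ge> 1" "a < b" "a mod t = b mod t" "a div t div (k+1) = b div t div (k+1)"
  shows "\<exists>i\<in>{1..k}. b - a = i*t"
proof -
  define ja where "ja = a div t"
  define jb where "jb = b div t"
  define \<rho> where "\<rho> = a mod t"
  have ea: "a = t*ja + \<rho>" unfolding ja_def \<rho>_def by (rule mult_div_mod_eq[symmetric])
  have eb: "b = t*jb + \<rho>" unfolding jb_def \<rho>_def assms(3) by (rule mult_div_mod_eq[symmetric])
  have "t*ja < t*jb" using ea eb assms(2) by linarith
  then have lt: "ja < jb" by simp
  define q where "q = ja div (k+1)"
  have qa: "(k+1)*q \<le> ja" unfolding q_def by (metis div_mult_mod_eq le_add1 mult.commute)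
  have qb: "jb < (k+1)*q + (k+1)" unfolding q_def ja_def using assms(4) jb_def
    by (metis add.commute dividend_less_times_div mult.commute zero_less_Suc Suc_eq_plus1)
  have d: "b - a = (jb - ja) * t" using ea eb lt by (simp add: diff_mult_distrib algebra_simps)
  have "jb - ja \<le> k" using qa qb by linarith
  moreover have "jb - ja \<ge> 1" using lt by linarith
  ultimately have "jb - ja \<in> {1..k}" by simp
  then show ?thesis using d by blast
qed


lemma div_lt_ceil:
  fixes j m k :: nat
  assumes "j < m" shows "j div (k+1) < (m + k) div (k+1)"
proof -
  have "j div (k+1) * (k+1) \<le> j" by (rule div_times_less_eq_dividend)
  then have "(j div (k+1) + 1) * (k+1) \<le> m + k" using assms by (simp add: algebra_simps)
  then have "(j div (k+1) + 1) * (k+1) div (k+1) \<le> (m + k) div (k+1)" by (rule div_le_mono)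
  moreover have "(j div (k+1) + 1) * (k+1) div (k+1) = j div (k+1) + 1" by (rule nonzero_mult_div_cancel_right) simp
  ultimately show ?thesis by linarith
qed

lemma theta_eq:
  fixes n t k :: nat
  assumes t: "t \<ge> 1"
  shows "theta_v n ((\<lambda>i. i*t) ` {1..k}) = (\<Sum>r<t. (card {x\<in>{1..n}. (x-1) mod t = r} + k) div (k+1))"
proof -
  define T where "T = (\<lambda>i. i*t) ` {1..k}"
  define cls where "cls = (\<lambda>r. {x\<in>{1..n}. (x-1) mod t = r})"
  define S where "S = (\<Sum>r<t. (card (cls r) + k) div (k+1))"
  define blk where "blk = (\<lambda>(r,q). {x\<in>{1..n}. (x-1) mod t = r \<and> (x-1) div t div (k+1) = q})"
  define I where "I = (SIGMA r:{..<t}. {..< (card (cls r) + k) div (k+1)})"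
  define C0 where "C0 = blk ` I"
  have fincls: "finite (cls r)" for r unfolding cls_def by simp
  have cliq: "is_clique n T K" if KC: "K \<in> C0" for K
  proof -
    obtain p where p: "K = blk p" using KC unfolding C0_def by blast
    obtain r q where "p = (r, q)" by (cases p)
    then have K: "K = {x\<in>{1..n}. (x-1) mod t = r \<and> (x-1) div t div (k+1) = q}"
      using p unfolding blk_def by simp
    have adj: "toeplitz_adj n T i j" if ij: "i \<in> K" "j \<in> K" "i < j" for i j
    proof -
      have i1: "i \<ge> 1" "j \<ge> 1" "i \<le> n" "j \<le> n" using ij K by auto
      have "\<exists>m\<in>{1..k}. (j-1) - (i-1) = m*t"
        by (rule block_diff) (use t ij K i1 in auto)
      then obtain m where m: "m \<in> {1..k}" "j - i = m*t" using i1 by auto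
      show ?thesis unfolding toeplitz_adj_def T_def using i1 ij(3) m by auto
    qed
    have sym: "toeplitz_adj n T i j \<Longrightarrow> toeplitz_adj n T j i" for i j
      unfolding toeplitz_adj_def by auto
    show ?thesis unfolding is_clique_def
    proof (intro conjI ballI impI)
      show "K \<subseteq> {1..n}" using K by auto
    next
      fix i j assume ij: "i \<in> K" "j \<in> K" "i \<noteq> j"
      show "toeplitz_adj n T i j"
      proof (cases "i < j")
        case True then show ?thesis using adj ij by blast
      next
        case False then have "j < i" using ij(3) by linarith
        then show ?thesis using adj[OF ij(2) ij(1)] sym by blast
      qed
    qed
  qed
  have union: "\<Union>C0 = {1..n}"
  proof
    show "\<Union>C0 \<subseteq> {1..n}" unfolding C0_def blk_def by auto
  next
    show "{1..n} \<subseteq> \<Union>C0"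
    proof
      fix x assume x: "x \<in> {1..n}"
      define r where "r = (x-1) mod t"
      define j where "j = (x-1) div t"
      have rt: "r < t" unfolding r_def using t by simp
      have xe: "x - 1 = r + t*j" unfolding r_def j_def by simp
      have sub: "(\<lambda>i. 1 + r + t*i) ` {0..j} \<subseteq> cls r"
      proof
        fix y assume "y \<in> (\<lambda>i. 1 + r + t*i) ` {0..j}"
        then obtain i where i: "i \<le> j" "y = 1 + r + t*i" by auto
        have tij: "t*i \<le> t*j" using i(1) by simp
        have x1: "x \<ge> 1" "x \<le> n" using x by auto
        have "y \<le> n" using i(2) xe x1 tij by linarith
        moreover have "(y - 1) mod t = r" using i(2) rt by simp
        ultimately show "y \<in> cls r" unfolding cls_def using i(2) by auto
      qed
      have "inj_on (\<lambda>i. 1 + r + t*i) {0..j}" using t by (intro inj_onI) simp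
      then have "card ((\<lambda>i. 1 + r + t*i) ` {0..j}) = j + 1" by (simp add: card_image)
      then have "j + 1 \<le> card (cls r)" using card_mono[OF fincls sub] by simp
      then have q: "j div (k+1) < (card (cls r) + k) div (k+1)" using div_lt_ceil by simp
      have "(r, j div (k+1)) \<in> I" unfolding I_def using rt q by simp
      moreover have "x \<in> blk (r, j div (k+1))" unfolding blk_def using x r_def j_def by simp
      ultimately show "x \<in> \<Union>C0" unfolding C0_def by blast
    qed
  qed
  have cov0: "is_clique_cover n T C0" unfolding is_clique_cover_def using cliq union by blast
  have finI: "finite I" unfolding I_def by simp
  have "card C0 \<le> card I" unfolding C0_def by (rule card_image_le[OF finI])
  also have "card I = S" unfolding I_def S_def by simp
  finally have c0: "card C0 \<le> S" .
  have fC0: "finite C0" unfolding C0_def using finI by simp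
  have ex: "\<exists>C. is_clique_cover n T C \<and> finite C \<and> card C = card C0" using cov0 fC0 by blast
  have up: "theta_v n T \<le> S"
    unfolding theta_v_def using Least_le[of "\<lambda>m. \<exists>C. is_clique_cover n T C \<and> finite C \<and> card C = m", OF ex] c0
    by linarith
  obtain C where C: "is_clique_cover n T C" "finite C" "card C = theta_v n T"
    unfolding theta_v_def using LeastI_ex[of "\<lambda>m. \<exists>C. is_clique_cover n T C \<and> finite C \<and> card C = m"] ex
    by blast
  define A where "A = (\<lambda>r. {K\<in>C. K \<inter> cls r \<noteq> {}})"
  have Cq: "\<And>K. K \<in> C \<Longrightarrow> is_clique n T K" using C(1) unfolding is_clique_cover_def by blast
  have CU: "\<Union>C = {1..n}" using C(1) unfolding is_clique_cover_def by blast
  have bnd: "(card (cls r) + k) div (k+1) \<le> card (A r)" for r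
  proof -
    have s1: "cls r \<subseteq> \<Union>(A r)"
    proof
      fix x assume x: "x \<in> cls r"
      then have "x \<in> \<Union>C" using CU unfolding cls_def by auto
      then obtain K where "K \<in> C" "x \<in> K" by blast
      then show "x \<in> \<Union>(A r)" using x unfolding A_def by blast
    qed
    have fU: "finite (\<Union>(A r))"
      by (rule finite_subset[of _ "{1..n}"]) (use CU in \<open>auto simp: A_def\<close>)
    have "card (cls r) \<le> card (\<Union>(A r))" by (rule card_mono[OF fU s1])
    also have "\<dots> \<le> sum card (A r)" by (rule card_Union_le_sum_card)
    also have "\<dots> \<le> card (A r) * (k+1)"
    proof -
      have "\<And>K. K \<in> A r \<Longrightarrow> card K \<le> k+1"
        using clique_card Cq unfolding A_def T_def by blast
      then show ?thesis using sum_bounded_above[of "A r" card "k+1"] by simp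
    qed
    finally have "card (cls r) + k < (card (A r) + 1) * (k+1)" by (simp add: algebra_simps)
    then have "(card (cls r) + k) div (k+1) < card (A r) + 1" by (rule less_mult_imp_div_less)
    then show ?thesis by linarith
  qed
  have disj: "\<forall>r\<in>{..<t}. \<forall>r'\<in>{..<t}. r \<noteq> r' \<longrightarrow> A r \<inter> A r' = {}"
  proof (intro ballI impI)
    fix r r' :: nat assume "r \<noteq> r'"
    show "A r \<inter> A r' = {}"
    proof (rule ccontr)
      assume "A r \<inter> A r' \<noteq> {}"
      then obtain K x y where K: "K \<in> C" "x \<in> K" "x \<in> cls r" "y \<in> K" "y \<in> cls r'"
        unfolding A_def by blast
      have cK: "is_clique n ((\<lambda>i. i*t) ` {1..k}) K" using Cq[OF K(1)] unfolding T_def .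
      have "(x-1) mod t = (y-1) mod t" using clique_same_class[OF cK K(2) K(4)] .
      then show False using K(3,5) \<open>r \<noteq> r'\<close> unfolding cls_def by auto
    qed
  qed
  have finA: "\<forall>r\<in>{..<t}. finite (A r)" unfolding A_def using C(2) by simp
  have "S \<le> (\<Sum>r<t. card (A r))" unfolding S_def by (rule sum_mono) (rule bnd)
  also have "\<dots> = card (\<Union>(A ` {..<t}))" by (rule card_UN_disjoint[symmetric]) (use finA disj in auto)
  also have "\<dots> \<le> card C" by (rule card_mono[OF C(2)]) (auto simp: A_def)
  finally have "S \<le> theta_v n T" using C(3) by simp
  then show ?thesis using up unfolding S_def T_def cls_def by simp
qed

lemma ceil_nat_div: "\<lceil>real_of_int (int a) / real (k + 1)\<rceil> = int ((a + k) div (k + 1))"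
proof -
  define d where "d = (a + k) div (k + 1)"
  have h0: "a + k = d * (k+1) + (a+k) mod (k+1)" unfolding d_def by (rule div_mult_mod_eq[symmetric])
  have hm: "(a+k) mod (k+1) < k+1" by simp
  have h1: "d * (k+1) \<le> a + k" using h0 by linarith
  have h2: "a + k < d * (k+1) + (k+1)" using h0 hm by linarith
  have r1': "real (d * (k+1)) \<le> real (a + k)" using h1 by (simp only: of_nat_le_iff)
  have r1: "real d * (real k + 1) \<le> real a + real k" using r1' by (simp add: algebra_simps)
  have h3: "a \<le> d * (k+1)" using h2 by linarith
  have r2': "real a \<le> real (d * (k+1))" using h3 by (simp only: of_nat_le_iff)
  have r2: "real a \<le> real d * (real k + 1)" using r2' by (simp add: algebra_simps)
  have kp: "real k + 1 > 0" by simp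
  have e1: "(real d - 1) * (real k + 1) = real d * (real k + 1) - (real k + 1)" by (simp add: algebra_simps)
  have "real d - 1 < real a / (real k + 1)" unfolding pos_less_divide_eq[OF kp] e1 using r1 by linarith
  moreover have "real a / (real k + 1) \<le> real d" unfolding pos_divide_le_eq[OF kp] using r2 by linarith
  ultimately show ?thesis unfolding d_def[symmetric] ceiling_eq_iff by (simp add: add.commute)
qed

lemma ceil_n_t: assumes "t \<ge> 1" shows "\<lceil>real n / real t\<rceil> = int (n div t + (if n mod t = 0 then 0 else 1))"
proof -
  have n: "real n = real t * real (n div t) + real (n mod t)"
    by (metis of_nat_add of_nat_mult div_mult_mod_eq mult.commute)
  have tp: "real t > 0" using assms by simp
  have lt: "real (n mod t) < real t" using assms by simp
  show ?thesis unfolding ceiling_eq_iff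
  proof (cases "n mod t = 0")
    case True
    then show "real_of_int (int (n div t + (if n mod t = 0 then 0 else 1))) - 1 < real n / real t \<and>
    real n / real t \<le> real_of_int (int (n div t + (if n mod t = 0 then 0 else 1)))"
      using n tp by (simp add: field_simps)
  next
    case False
    then have "real (n mod t) > 0" by simp
    then show "real_of_int (int (n div t + (if n mod t = 0 then 0 else 1))) - 1 < real n / real t \<and>
    real n / real t \<le> real_of_int (int (n div t + (if n mod t = 0 then 0 else 1)))"
      using n tp lt False by (simp add: field_simps)
  qed
qed

lemma count_lt: fixes r t j n :: nat assumes "r < t" shows "(r + t*j < n) \<longleftrightarrow> j < n div t + (if r < n mod t then 1 else 0)"
proof -
  define q where "q = n div t"
  define p where "p = n mod t"
  have n: "n = t*q + p" unfolding q_def p_def by (rule mult_div_mod_eq[symmetric])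
  have p: "p < t" using assms unfolding p_def by simp
  consider "j < q" | "j = q" | "j > q" by linarith
  then show ?thesis
  proof cases
    case 1
    then have "t*j + t \<le> t*q" by (metis Suc_leI mult_Suc_right mult_le_mono2 add.commute)
    then show ?thesis using 1 n assms unfolding q_def[symmetric] p_def[symmetric] by auto
  next
    case 2 then show ?thesis using n unfolding q_def[symmetric] p_def[symmetric] by auto
  next
    case 3
    then have "t*q + t \<le> t*j" by (metis Suc_leI mult_Suc_right mult_le_mono2 add.commute)
    then show ?thesis using 3 n p unfolding q_def[symmetric] p_def[symmetric] by auto
  qed
qed


lemma cls_card:
  fixes r t n :: nat
  assumes rt: "r < t"
  shows "card {x\<in>{1..n}. (x-1) mod t = r} = n div t + (if r < n mod t then 1 else 0)"
proof -
  define M where "M = n div t + (if r < n mod t then 1 else 0)"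
  have eq: "{x\<in>{1..n}. (x-1) mod t = r} = (\<lambda>j. 1 + r + t*j) ` {..<M}"
  proof
    show "{x\<in>{1..n}. (x-1) mod t = r} \<subseteq> (\<lambda>j. 1 + r + t*j) ` {..<M}"
    proof
      fix x assume x: "x \<in> {x\<in>{1..n}. (x-1) mod t = r}"
      define j where "j = (x-1) div t"
      have x1: "x \<ge> 1" "x \<le> n" "(x-1) mod t = r" using x by auto
      have xe: "x - 1 = t*j + r" unfolding j_def using x1(3) mult_div_mod_eq[of t "x-1"] by simp
      have "r + t*j < n" using xe x1 by linarith
      then have "j < M" unfolding M_def using count_lt[OF rt] by blast
      moreover have "x = 1 + r + t*j" using xe x1 by linarith
      ultimately show "x \<in> (\<lambda>j. 1 + r + t*j) ` {..<M}" by blast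
    qed
  next
    show "(\<lambda>j. 1 + r + t*j) ` {..<M} \<subseteq> {x\<in>{1..n}. (x-1) mod t = r}"
    proof
      fix x assume "x \<in> (\<lambda>j. 1 + r + t*j) ` {..<M}"
      then obtain j where j: "j < M" "x = 1 + r + t*j" by blast
      have "r + t*j < n" using j(1) unfolding M_def using count_lt[OF rt] by blast
      moreover have "(r + t*j) mod t = r" using rt by simp
      ultimately show "x \<in> {x\<in>{1..n}. (x-1) mod t = r}" using j(2) by simp
    qed
  qed
  have "inj_on (\<lambda>j. 1 + r + t*j) {..<M}" using rt by (intro inj_onI) simp
  then show ?thesis unfolding eq M_def[symmetric] by (simp add: card_image)
qed

theorem theorem2p10:
  fixes n t k s :: nat
  assumes "n \<ge> 2" "t \<ge> 1" "k \<ge> 1" "n > (2*k - 1) * t"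
    and "1 \<le> s" "s \<le> t" "s mod t = n mod t"
  shows "int (theta_v n ((\<lambda>i. i * t) ` {1..k})) =
     int s * \<lceil>real_of_int \<lceil>real n / real t\<rceil> / real (k + 1)\<rceil>
     + int (t - s) * \<lceil>real_of_int \<lfloor>real n / real t\<rfloor> / real (k + 1)\<rceil>"
proof -
  define q where "q = n div t"
  define p where "p = n mod t"
  define c where "c = (\<lambda>m::nat. (m + k) div (k+1))"
  have pt: "p < t" unfolding p_def using assms(2) by simp
  have th: "theta_v n ((\<lambda>i. i * t) ` {1..k}) = (\<Sum>r<t. c (q + (if r < p then 1 else 0)))"
    unfolding theta_eq[OF assms(2)]
  proof (rule sum.cong[OF refl])
    fix r assume "r \<in> {..<t}"
    then have "r < t" by simp
    from cls_card[OF this, of n] show "(card {x \<in> {1..n}. (x - 1) mod t = r} + k) div (k + 1) = c (q + (if r < p then 1 else 0))"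
      unfolding c_def q_def p_def by simp
  qed
  have split: "{..<t} = {..<p} \<union> {p..<t}" using pt by auto
  have "(\<Sum>r<t. c (q + (if r < p then 1 else 0))) =
        (\<Sum>r<p. c (q + (if r < p then 1 else 0))) + (\<Sum>r\<in>{p..<t}. c (q + (if r < p then 1 else 0)))"
    unfolding split by (rule sum.union_disjoint) auto
  also have "\<dots> = (\<Sum>r<p. c (q+1)) + (\<Sum>r\<in>{p..<t}. c q)"
    by (intro arg_cong2[where f="(+)"] sum.cong) auto
  also have "\<dots> = p * c (q+1) + (t - p) * c q" by simp
  finally have th2: "theta_v n ((\<lambda>i. i * t) ` {1..k}) = p * c (q+1) + (t - p) * c q" using th by simp
  have fl: "\<lfloor>real n / real t\<rfloor> = int q" unfolding q_def using floor_divide_of_nat_eq[of n t] by simp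
  have cl: "\<lceil>real n / real t\<rceil> = int (q + (if p = 0 then 0 else 1))" unfolding q_def p_def by (rule ceil_n_t[OF assms(2)])
  have cq: "\<lceil>real_of_int (int m) / real (k + 1)\<rceil> = int (c m)" for m unfolding c_def by (rule ceil_nat_div)
  show ?thesis
  proof (cases "p = 0")
    case True
    have "s = t"
    proof (rule ccontr)
      assume "s \<noteq> t" then have "s < t" using assms(6) by simp
      then have "s mod t = s" by simp
      then show False using assms(5,7) True unfolding p_def by simp
    qed
    then show ?thesis unfolding th2 fl cl cq using True by simp
  next
    case False
    have "s \<noteq> t"
    proof
      assume "s = t" then show False using assms(7) False unfolding p_def by simp
    qed
    then have "s < t" using assms(6) by simp
    then have "s = p" using assms(7) unfolding p_def by simp
    then show ?thesis unfolding th2 fl cl cq using False by simp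
  qed
qed

end
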